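(* Let $(a_k)_{k\in\mathbb Z}$ be a nonnegative sequence in $\ell^2(\mathbb Z)$ and let $A=[a_{i-j}]_{i,j\in\mathbb N_0}$. Then \[\frac1{\sqrt2}\|(a_k)\|_2\le\mathfrak s(\mathcal S(A))\le\|(a_k)\|_2.\]
   Context: For a nonnegative matrix $A$, $\mathcal S(A)$ is the set of matrices $S=[s_{ij}]$ with $|s_{ij}|\le a_{ij}$ for all $i,j$, and $\mathfrak s(\mathcal S(A))=\sup_{S\in\mathcal S(A)}\|S\|_m$, where $\|S\|_m$ is the norm of the Schur multiplier $T=[t_{ij}]\mapsto[s_{ij}t_{ij}]$ on $\mathcal B(\ell^2(\mathbb N_0))$. *)

theory Defs
  imports "HOL-Analysis.Analysis"
begin

text \<open>Infinite matrices indexed by \<open>\<nat>\<^sub>0 \<times> \<nat>\<^sub>0\<close> with complex entries, viewed as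
  (possibly unbounded) operators on \<open>\<ell>\<^sup>2(\<nat>\<^sub>0)\<close>. The operator norm is computed as the
  supremum of the bilinear form over finitely supported vectors in the unit ball;
  it is \<open>\<infinity>\<close> exactly when the matrix does not define a bounded operator.\<close>

definition mat_norm :: "(nat \<Rightarrow> nat \<Rightarrow> complex) \<Rightarrow> ereal" where
  "mat_norm T = (SUP (n, x, y) \<in> {(n, x, y). (\<Sum>j<n. (cmod (x j))\<^sup>2) \<le> 1 \<and> (\<Sum>i<n. (cmod (y i))\<^sup>2) \<le> 1}.
      ereal (cmod (\<Sum>i<n. \<Sum>j<n. cnj (y i) * T i j * x j)))"

definition schur_mult_norm :: "(nat \<Rightarrow> nat \<Rightarrow> complex) \<Rightarrow> ereal" where
  "schur_mult_norm S = (SUP T \<in> {T. mat_norm T \<le> 1}. mat_norm (\<lambda>i j. S i j * T i j))"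

definition dominated_set :: "(nat \<Rightarrow> nat \<Rightarrow> real) \<Rightarrow> (nat \<Rightarrow> nat \<Rightarrow> complex) set" where
  "dominated_set A = {S. \<forall>i j. cmod (S i j) \<le> A i j}"

definition schur_sup :: "(nat \<Rightarrow> nat \<Rightarrow> real) \<Rightarrow> ereal" where
  "schur_sup A = (SUP S \<in> dominated_set A. schur_mult_norm S)"

definition l2norm_int :: "(int \<Rightarrow> real) \<Rightarrow> real" where
  "l2norm_int a = sqrt (infsum (\<lambda>k. (a k)\<^sup>2) UNIV)"

end

theory Submission
  imports Defs
begin

definition ee :: "nat \<Rightarrow> real \<Rightarrow> complex" where
  "ee M t = cis (2 * pi * t / real M)"

lemma ee_add: "ee M (s + t) = ee M s * ee M t"
  by (simp add: ee_def cis_mult add_divide_distrib distrib_left)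

lemma ee_cnj: "cnj (ee M t) = ee M (- t)"
  by (simp add: ee_def cis_cnj)

lemma norm_ee [simp]: "norm (ee M t) = 1"
  by (simp add: ee_def)

lemma ee_zero [simp]: "ee M 0 = 1"
  by (simp add: ee_def)

lemma orth:
  assumes M: "0 < M" and d: "\<bar>d\<bar> < int M"
  shows "(\<Sum>l<M. ee M (real l * of_int d)) = (if d = 0 then of_nat M else 0)"
proof (cases "d = 0")
  case True then show ?thesis by simp
next
  case False
  define z where "z = ee M (of_int d)"
  have pw: "ee M (real l * of_int d) = z ^ l" for l
  proof -
    have "z ^ l = cis (real l * (2 * pi * of_int d / real M))"
      by (simp only: z_def ee_def Complex.DeMoivre)
    also have "real l * (2 * pi * of_int d / real M) = 2 * pi * (real l * of_int d) / real M"
      by simp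
    finally show ?thesis by (simp add: ee_def)
  qed
  have zM: "z ^ M = 1"
  proof -
    have "z ^ M = cis (2 * pi * of_int d)"
      using M by (simp add: z_def ee_def Complex.DeMoivre)
    also have "\<dots> = 1" by (rule cis_multiple_2pi) simp
    finally show ?thesis .
  qed
  have z1: "z \<noteq> 1"
  proof
    assume "z = 1"
    then have "cos (2 * pi * of_int d / real M) = 1"
      unfolding z_def ee_def by (metis Re_complex_of_real cis.sel(1) of_real_1)
    then obtain n :: int where n: "2 * pi * of_int d / real M = of_int n * 2 * pi"
      using cos_one_2pi_int by blast
    then have "real_of_int d = of_int n * real M" using M
      by (simp add: field_simps)
    then have "d = n * int M" by (metis of_int_eq_iff of_int_mult of_int_of_nat_eq)
    then have e: "\<bar>d\<bar> = \<bar>n\<bar> * int M" by (simp add: abs_mult)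
    have "n \<noteq> 0" using False \<open>d = n * int M\<close> by auto
    then have "1 \<le> \<bar>n\<bar>" by simp
    then have "1 * int M \<le> \<bar>n\<bar> * int M" by (rule mult_right_mono) simp
    with e d show False by simp
  qed
  have "(\<Sum>l<M. ee M (real l * of_int d)) = (\<Sum>l<M. z ^ l)" by (simp add: pw)
  also have "\<dots> = 0" using z1 zM by (simp add: sum_gp_strict)
  finally show ?thesis using False by simp
qed

lemma ee_mult: "ee M s * ee M t = ee M (s + t)"
  by (simp add: ee_add)

lemma ee_cong: "s = t \<Longrightarrow> ee M s = ee M t" by simp

lemma dsum:
  assumes M: "0 < M" and x: "\<bar>x\<bar> < int M" and y: "\<bar>y\<bar> < int M"
  shows "(\<Sum>\<beta><M. \<Sum>l<M. ee M (real l * of_int x + real \<beta> * of_int y)) =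
         (if x = 0 \<and> y = 0 then of_nat M ^ 2 else 0)"
proof -
  have "(\<Sum>\<beta><M. \<Sum>l<M. ee M (real l * of_int x + real \<beta> * of_int y)) =
        (\<Sum>\<beta><M. \<Sum>l<M. ee M (real \<beta> * of_int y) * ee M (real l * of_int x))"
    by (simp add: ee_mult add.commute)
  also have "\<dots> = (\<Sum>\<beta><M. ee M (real \<beta> * of_int y)) * (\<Sum>l<M. ee M (real l * of_int x))"
    by (simp add: sum_product)
  also have "\<dots> = (if x = 0 \<and> y = 0 then of_nat M ^ 2 else 0)"
    using orth[OF M x] orth[OF M y] by (simp add: power2_eq_square)
  finally show ?thesis .
qed

lemma sum_swap3:
  "(\<Sum>\<beta><M. \<Sum>l<M. \<Sum>i\<in>I. f \<beta> l i) = (\<Sum>i\<in>I. \<Sum>\<beta><M. \<Sum>l<M. f \<beta> l i)"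
proof -
  have "(\<Sum>\<beta><M. \<Sum>l<M. \<Sum>i\<in>I. f \<beta> l i) = (\<Sum>\<beta><M. \<Sum>i\<in>I. \<Sum>l<M. f \<beta> l i)"
    by (rule sum.cong[OF refl]) (rule sum.swap)
  also have "\<dots> = (\<Sum>i\<in>I. \<Sum>\<beta><M. \<Sum>l<M. f \<beta> l i)"
    by (rule sum.swap)
  finally show ?thesis .
qed

lemma parseval:
  assumes M: "0 < M" and m: "m \<le> M"
  shows "(\<Sum>l<M. (cmod (\<Sum>j<m. x j * ee M (- (real l * real j))))\<^sup>2) = real M * (\<Sum>j<m. (cmod (x j))\<^sup>2)"
proof -
  have pt: "x j * ee M (- (real l * real j)) * cnj (x j' * ee M (- (real l * real j'))) =
        x j * cnj (x j') * ee M (real l * of_int (int j' - int j))" for j j' l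
    by (simp add: ee_cnj mult_ac ee_mult algebra_simps)
  have "complex_of_real (\<Sum>l<M. (cmod (\<Sum>j<m. x j * ee M (- (real l * real j))))\<^sup>2) =
     (\<Sum>l<M. (\<Sum>j<m. x j * ee M (- (real l * real j))) * cnj (\<Sum>j<m. x j * ee M (- (real l * real j))))"
    by (simp only: of_real_sum complex_norm_square)
  also have "\<dots> = (\<Sum>l<M. \<Sum>j<m. \<Sum>j'<m. x j * cnj (x j') * ee M (real l * of_int (int j' - int j)))"
    unfolding cnj_sum sum_product by (intro sum.cong refl) (rule pt)
  also have "\<dots> = (\<Sum>j<m. \<Sum>j'<m. x j * cnj (x j') * (\<Sum>l<M. ee M (real l * of_int (int j' - int j))))"
    by (simp add: sum.swap[of _ "{..<M}"] sum_distrib_left)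
  also have "\<dots> = (\<Sum>j<m. \<Sum>j'<m. x j * cnj (x j') * (if j' = j then of_nat M else 0))"
  proof (intro sum.cong refl)
    fix j j' assume "j \<in> {..<m}" "j' \<in> {..<m}"
    then have "\<bar>int j' - int j\<bar> < int M" using m by auto
    then show "x j * cnj (x j') * (\<Sum>l<M. ee M (real l * of_int (int j' - int j))) =
          x j * cnj (x j') * (if j' = j then of_nat M else 0)"
      using orth[OF M, of "int j' - int j"] by (simp del: of_int_diff)
  qed
  also have "\<dots> = (\<Sum>j<m. x j * cnj (x j) * of_nat M)"
    by (simp add: if_distrib[of "\<lambda>t. _ * t"] sum.delta' cong: if_cong)
  also have "\<dots> = complex_of_real (real M * (\<Sum>j<m. (cmod (x j))\<^sup>2))"
    by (simp add: complex_norm_square sum_distrib_left mult_ac del: of_real_power)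
  finally show ?thesis using of_real_eq_iff by blast
qed

definition GG :: "nat \<Rightarrow> int set \<Rightarrow> (int \<Rightarrow> real) \<Rightarrow> nat \<Rightarrow> nat \<Rightarrow> complex" where
  "GG M K b \<beta> l = (\<Sum>k\<in>K. of_real (b k) * ee M (real l * of_int k + real \<beta> * of_int (k^2)))"

lemma GG_sq:
  "GG M K b \<beta> l * cnj (GG M K b \<beta> l) =
   (\<Sum>k1\<in>K. \<Sum>k2\<in>K. of_real (b k1 * b k2) *
      ee M (real l * of_int (k1 - k2) + real \<beta> * of_int (k1^2 - k2^2)))"
proof -
  have pt: "of_real (b k1) * ee M (real l * of_int k1 + real \<beta> * of_int (k1^2)) *
      cnj (of_real (b k2) * ee M (real l * of_int k2 + real \<beta> * of_int (k2^2))) =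
      of_real (b k1 * b k2) * ee M (real l * of_int (k1 - k2) + real \<beta> * of_int (k1^2 - k2^2))" for k1 k2
  proof -
    have "of_real (b k1) * ee M (real l * of_int k1 + real \<beta> * of_int (k1^2)) *
      cnj (of_real (b k2) * ee M (real l * of_int k2 + real \<beta> * of_int (k2^2))) =
      of_real (b k1 * b k2) * (ee M (real l * of_int k1 + real \<beta> * of_int (k1^2)) *
         ee M (- (real l * of_int k2 + real \<beta> * of_int (k2^2))))"
      by (simp add: ee_cnj mult_ac)
    also have "ee M (real l * of_int k1 + real \<beta> * of_int (k1^2)) *
         ee M (- (real l * of_int k2 + real \<beta> * of_int (k2^2))) =
         ee M (real l * of_int (k1 - k2) + real \<beta> * of_int (k1^2 - k2^2))"
      unfolding ee_mult by (rule ee_cong) (simp add: algebra_simps)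
    finally show ?thesis .
  qed
  show ?thesis unfolding GG_def cnj_sum sum_product by (intro sum.cong refl) (rule pt)
qed

lemma second_moment:
  assumes M: "0 < M" and K: "finite K"
    and bd: "\<And>k1 k2. k1 \<in> K \<Longrightarrow> k2 \<in> K \<Longrightarrow> \<bar>k1 - k2\<bar> < int M \<and> \<bar>k1^2 - k2^2\<bar> < int M"
  shows "(\<Sum>\<beta><M. \<Sum>l<M. (cmod (GG M K b \<beta> l))\<^sup>2) = (real M)^2 * (\<Sum>k\<in>K. (b k)^2)"
proof -
  have "complex_of_real (\<Sum>\<beta><M. \<Sum>l<M. (cmod (GG M K b \<beta> l))\<^sup>2) =
        (\<Sum>\<beta><M. \<Sum>l<M. GG M K b \<beta> l * cnj (GG M K b \<beta> l))"
    by (simp only: of_real_sum complex_norm_square)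
  also have "\<dots> = (\<Sum>\<beta><M. \<Sum>l<M. \<Sum>k1\<in>K. \<Sum>k2\<in>K. of_real (b k1 * b k2) *
      ee M (real l * of_int (k1 - k2) + real \<beta> * of_int (k1^2 - k2^2)))"
    by (simp only: GG_sq)
  also have "\<dots> = (\<Sum>k1\<in>K. \<Sum>k2\<in>K. \<Sum>\<beta><M. \<Sum>l<M. of_real (b k1 * b k2) *
      ee M (real l * of_int (k1 - k2) + real \<beta> * of_int (k1^2 - k2^2)))"
    by (simp only: sum_swap3)
  also have "\<dots> = (\<Sum>k1\<in>K. \<Sum>k2\<in>K. of_real (b k1 * b k2) *
      (if k1 - k2 = 0 \<and> k1^2 - k2^2 = 0 then of_nat M ^ 2 else 0))"
  proof (intro sum.cong refl)
    fix k1 k2 assume "k1 \<in> K" "k2 \<in> K"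
    from bd[OF this] show "(\<Sum>\<beta><M. \<Sum>l<M. of_real (b k1 * b k2) *
      ee M (real l * of_int (k1 - k2) + real \<beta> * of_int (k1^2 - k2^2))) =
      of_real (b k1 * b k2) * (if k1 - k2 = 0 \<and> k1^2 - k2^2 = 0 then of_nat M ^ 2 else 0)"
      using dsum[OF M, of "k1 - k2" "k1^2 - k2^2"]
      by (simp only: sum_distrib_left[symmetric])
  qed
  also have "\<dots> = (\<Sum>k1\<in>K. \<Sum>k2\<in>K. (if k2 = k1 then of_real ((b k1)^2) * of_nat M ^ 2 else 0))"
    by (intro sum.cong refl) (auto simp: power2_eq_square)
  also have "\<dots> = (\<Sum>k1\<in>K. of_real ((b k1)^2) * of_nat M ^ 2)"
    using K by (simp add: sum.delta)
  also have "\<dots> = complex_of_real ((real M)^2 * (\<Sum>k\<in>K. (b k)^2))"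
    by (simp add: sum_distrib_left mult_ac)
  finally show ?thesis using of_real_eq_iff by blast
qed

lemma quad_sol:
  fixes k1 k2 k3 k4 :: int
  assumes "k1 - k2 + k3 - k4 = 0" "k1^2 - k2^2 + k3^2 - k4^2 = 0"
  shows "(k1 = k2 \<and> k3 = k4) \<or> (k1 = k4 \<and> k3 = k2)"
proof -
  have h: "k4 = k1 - k2 + k3" using assms(1) by simp
  have "2 * ((k1 - k2) * (k2 - k3)) = k1^2 - k2^2 + k3^2 - k4^2"
    by (simp add: h power2_eq_square algebra_simps)
  then have "(k1 - k2) * (k2 - k3) = 0" using assms(2) by simp
  then show ?thesis using h by auto
qed

lemma sum2_delta:
  assumes A: "finite A" and B: "finite B" and a: "a \<in> A" and c: "c \<in> B"
  shows "(\<Sum>x\<in>A. \<Sum>y\<in>B. if x = a \<and> y = c then f x y else 0) = f a c"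
proof -
  have "(\<Sum>x\<in>A. \<Sum>y\<in>B. if x = a \<and> y = c then f x y else 0) = (\<Sum>x\<in>A. if x = a then f a c else 0)"
  proof (intro sum.cong refl)
    fix x assume "x \<in> A"
    show "(\<Sum>y\<in>B. if x = a \<and> y = c then f x y else 0) = (if x = a then f a c else 0)"
      using B c by (cases "x = a") (simp_all add: sum.delta)
  qed
  also have "\<dots> = f a c" using A a by (simp add: sum.delta)
  finally show ?thesis .
qed

lemma fourth_moment:
  assumes M: "0 < M" and K: "finite K" and bnn: "\<And>k. b k \<ge> 0"
    and bd: "\<And>k1 k2 k3 k4. k1 \<in> K \<Longrightarrow> k2 \<in> K \<Longrightarrow> k3 \<in> K \<Longrightarrow> k4 \<in> K \<Longrightarrow>
       \<bar>k1 - k2 + k3 - k4\<bar> < int M \<and> \<bar>k1^2 - k2^2 + k3^2 - k4^2\<bar> < int M"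
  shows "(\<Sum>\<beta><M. \<Sum>l<M. (cmod (GG M K b \<beta> l))^4) \<le> 2 * (real M)^2 * (\<Sum>k\<in>K. (b k)^2)^2"
proof -
  define C where "C k1 k3 k2 k4 \<longleftrightarrow> k1 - k2 + k3 - k4 = 0 \<and> k1^2 - k2^2 + k3^2 - k4^2 = 0" for k1 k3 k2 k4 :: int
  have pt: "of_real (b k1 * b k2) * ee M (real l * of_int (k1 - k2) + real \<beta> * of_int (k1^2 - k2^2)) *
     (of_real (b k3 * b k4) * ee M (real l * of_int (k3 - k4) + real \<beta> * of_int (k3^2 - k4^2))) =
     of_real (b k1 * b k2 * b k3 * b k4) * ee M (real l * of_int (k1 - k2 + k3 - k4) + real \<beta> * of_int (k1^2 - k2^2 + k3^2 - k4^2))"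
    for k1 k2 k3 k4 l \<beta>
  proof -
    have "of_real (b k1 * b k2) * ee M (real l * of_int (k1 - k2) + real \<beta> * of_int (k1^2 - k2^2)) *
     (of_real (b k3 * b k4) * ee M (real l * of_int (k3 - k4) + real \<beta> * of_int (k3^2 - k4^2))) =
      of_real (b k1 * b k2 * b k3 * b k4) * (ee M (real l * of_int (k1 - k2) + real \<beta> * of_int (k1^2 - k2^2)) *
      ee M (real l * of_int (k3 - k4) + real \<beta> * of_int (k3^2 - k4^2)))"
      by (simp add: mult_ac)
    also have "(ee M (real l * of_int (k1 - k2) + real \<beta> * of_int (k1^2 - k2^2)) *
      ee M (real l * of_int (k3 - k4) + real \<beta> * of_int (k3^2 - k4^2))) =
      ee M (real l * of_int (k1 - k2 + k3 - k4) + real \<beta> * of_int (k1^2 - k2^2 + k3^2 - k4^2))"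
      unfolding ee_mult by (rule ee_cong) (simp add: algebra_simps)
    finally show ?thesis .
  qed
  have "complex_of_real (\<Sum>\<beta><M. \<Sum>l<M. (cmod (GG M K b \<beta> l))^4) =
        (\<Sum>\<beta><M. \<Sum>l<M. (GG M K b \<beta> l * cnj (GG M K b \<beta> l)) * (GG M K b \<beta> l * cnj (GG M K b \<beta> l)))"
  proof -
    have "(cmod z)^4 = (cmod z)^2 * (cmod z)^2" for z by simp
    then show ?thesis by (simp only: of_real_sum of_real_mult complex_norm_square)
  qed
  also have "\<dots> = (\<Sum>\<beta><M. \<Sum>l<M. \<Sum>k1\<in>K. \<Sum>k3\<in>K. \<Sum>k2\<in>K. \<Sum>k4\<in>K.
     of_real (b k1 * b k2 * b k3 * b k4) * ee M (real l * of_int (k1 - k2 + k3 - k4) + real \<beta> * of_int (k1^2 - k2^2 + k3^2 - k4^2)))"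
    by (simp only: GG_sq sum_product pt)
  also have "\<dots> = (\<Sum>k1\<in>K. \<Sum>k3\<in>K. \<Sum>k2\<in>K. \<Sum>k4\<in>K. \<Sum>\<beta><M. \<Sum>l<M.
     of_real (b k1 * b k2 * b k3 * b k4) * ee M (real l * of_int (k1 - k2 + k3 - k4) + real \<beta> * of_int (k1^2 - k2^2 + k3^2 - k4^2)))"
    by (simp only: sum_swap3)
  also have "\<dots> = (\<Sum>k1\<in>K. \<Sum>k3\<in>K. \<Sum>k2\<in>K. \<Sum>k4\<in>K. of_real ((real M)^2 * (if C k1 k3 k2 k4 then b k1 * b k2 * b k3 * b k4 else 0)))"
  proof (intro sum.cong refl)
    fix k1 k2 k3 k4 assume "k1 \<in> K" "k3 \<in> K" "k2 \<in> K" "k4 \<in> K"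
    from bd[OF this(1,3,2,4)] show "(\<Sum>\<beta><M. \<Sum>l<M.
     of_real (b k1 * b k2 * b k3 * b k4) * ee M (real l * of_int (k1 - k2 + k3 - k4) + real \<beta> * of_int (k1^2 - k2^2 + k3^2 - k4^2))) =
     of_real ((real M)^2 * (if C k1 k3 k2 k4 then b k1 * b k2 * b k3 * b k4 else 0))"
      using dsum[OF M, of "k1 - k2 + k3 - k4" "k1^2 - k2^2 + k3^2 - k4^2"]
      by (simp add: sum_distrib_left[symmetric] C_def)
  qed
  also have "\<dots> = complex_of_real ((real M)^2 * (\<Sum>k1\<in>K. \<Sum>k3\<in>K. \<Sum>k2\<in>K. \<Sum>k4\<in>K. (if C k1 k3 k2 k4 then b k1 * b k2 * b k3 * b k4 else 0)))"
    by (simp only: of_real_sum sum_distrib_left)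
  finally have eq: "(\<Sum>\<beta><M. \<Sum>l<M. (cmod (GG M K b \<beta> l))^4) = (real M)^2 * (\<Sum>k1\<in>K. \<Sum>k3\<in>K. \<Sum>k2\<in>K. \<Sum>k4\<in>K. (if C k1 k3 k2 k4 then b k1 * b k2 * b k3 * b k4 else 0))"
    using of_real_eq_iff by blast
  have "(\<Sum>k1\<in>K. \<Sum>k3\<in>K. \<Sum>k2\<in>K. \<Sum>k4\<in>K. (if C k1 k3 k2 k4 then b k1 * b k2 * b k3 * b k4 else 0)) \<le>
        (\<Sum>k1\<in>K. \<Sum>k3\<in>K. \<Sum>k2\<in>K. \<Sum>k4\<in>K. ((if k2 = k1 \<and> k4 = k3 then b k1 * b k2 * b k3 * b k4 else 0)
           + (if k4 = k1 \<and> k2 = k3 then b k1 * b k2 * b k3 * b k4 else 0)))"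
  proof (intro sum_mono)
    fix k1 k2 k3 k4
    define P where "P = b k1 * b k2 * b k3 * b k4"
    have p: "0 \<le> P" using bnn unfolding P_def by simp
    have ifnn: "0 \<le> (if c then P else 0)" for c using p by simp
    show "(if C k1 k3 k2 k4 then b k1 * b k2 * b k3 * b k4 else 0) \<le>
       (if k2 = k1 \<and> k4 = k3 then b k1 * b k2 * b k3 * b k4 else 0) + (if k4 = k1 \<and> k2 = k3 then b k1 * b k2 * b k3 * b k4 else 0)"
      unfolding P_def[symmetric]
    proof (cases "C k1 k3 k2 k4")
      case True
      then have "(k2 = k1 \<and> k4 = k3) \<or> (k4 = k1 \<and> k2 = k3)" using quad_sol unfolding C_def by blast
      then show "(if C k1 k3 k2 k4 then P else 0) \<le>
         (if k2 = k1 \<and> k4 = k3 then P else 0) + (if k4 = k1 \<and> k2 = k3 then P else 0)"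
      proof
        assume h: "k2 = k1 \<and> k4 = k3"
        show ?thesis unfolding if_P[OF True] if_P[OF h] using ifnn[of "k4 = k1 \<and> k2 = k3"] by linarith
      next
        assume h: "k4 = k1 \<and> k2 = k3"
        show ?thesis unfolding if_P[OF True] if_P[OF h] using ifnn[of "k2 = k1 \<and> k4 = k3"] by linarith
      qed
    next
      case False
      show "(if C k1 k3 k2 k4 then P else 0) \<le>
         (if k2 = k1 \<and> k4 = k3 then P else 0) + (if k4 = k1 \<and> k2 = k3 then P else 0)"
        unfolding if_not_P[OF False]
        using ifnn[of "k2 = k1 \<and> k4 = k3"] ifnn[of "k4 = k1 \<and> k2 = k3"] by linarith
    qed
  qed
  also have "\<dots> = (\<Sum>k1\<in>K. \<Sum>k3\<in>K. (\<Sum>k2\<in>K. \<Sum>k4\<in>K. (if k2 = k1 \<and> k4 = k3 then b k1 * b k2 * b k3 * b k4 else 0))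
           + (\<Sum>k2\<in>K. \<Sum>k4\<in>K. (if k2 = k3 \<and> k4 = k1 then b k1 * b k2 * b k3 * b k4 else 0)))"
    by (simp only: sum.distrib conj_commute)
  also have "\<dots> = (\<Sum>k1\<in>K. \<Sum>k3\<in>K. 2 * ((b k1)^2 * (b k3)^2))"
  proof (intro sum.cong refl)
    fix k1 k3 assume "k1 \<in> K" "k3 \<in> K"
    then show "(\<Sum>k2\<in>K. \<Sum>k4\<in>K. (if k2 = k1 \<and> k4 = k3 then b k1 * b k2 * b k3 * b k4 else 0))
           + (\<Sum>k2\<in>K. \<Sum>k4\<in>K. (if k2 = k3 \<and> k4 = k1 then b k1 * b k2 * b k3 * b k4 else 0)) =
           2 * ((b k1)^2 * (b k3)^2)"
      using sum2_delta[OF K K, of k1 k3 "\<lambda>k2 k4. b k1 * b k2 * b k3 * b k4"]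
            sum2_delta[OF K K, of k3 k1 "\<lambda>k2 k4. b k1 * b k2 * b k3 * b k4"]
      by (simp add: power2_eq_square mult_ac)
  qed
  also have "\<dots> = 2 * (\<Sum>k\<in>K. (b k)^2)^2"
    by (simp add: power2_eq_square sum_distrib_left sum_distrib_right mult_ac)
  finally show ?thesis unfolding eq using M by (simp add: mult_ac)
qed

lemma holder4:
  fixes u :: "'a \<Rightarrow> real"
  assumes "\<And>i. i \<in> I \<Longrightarrow> u i \<ge> 0"
  shows "(\<Sum>i\<in>I. (u i)^2)^3 \<le> (\<Sum>i\<in>I. u i)^2 * (\<Sum>i\<in>I. (u i)^4)"
proof -
  define X where "X = (\<Sum>i\<in>I. (u i)^2)"
  define Y where "Y = (\<Sum>i\<in>I. u i)"
  define Z where "Z = (\<Sum>i\<in>I. (u i)^3)"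
  define W where "W = (\<Sum>i\<in>I. (u i)^4)"
  have X0: "X \<ge> 0" unfolding X_def by (simp add: sum_nonneg)
  have Y0: "Y \<ge> 0" unfolding Y_def using assms by (simp add: sum_nonneg)
  have Z0: "Z \<ge> 0" unfolding Z_def using assms by (simp add: sum_nonneg)
  have c1: "X^2 \<le> Y * Z"
  proof -
    have "(\<Sum>i\<in>I. sqrt (u i) * (sqrt (u i) * u i))^2 \<le> (\<Sum>i\<in>I. (sqrt (u i))^2) * (\<Sum>i\<in>I. (sqrt (u i) * u i)^2)"
      by (rule Cauchy_Schwarz_ineq_sum)
    moreover have "(\<Sum>i\<in>I. sqrt (u i) * (sqrt (u i) * u i)) = X"
      unfolding X_def by (intro sum.cong refl) (use assms in \<open>simp add: power2_eq_square mult.assoc[symmetric]\<close>)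
    moreover have "(\<Sum>i\<in>I. (sqrt (u i))^2) = Y"
      unfolding Y_def by (intro sum.cong refl) (use assms in simp)
    moreover have "(\<Sum>i\<in>I. (sqrt (u i) * u i)^2) = Z"
      unfolding Z_def by (intro sum.cong refl) (use assms in \<open>simp add: power_mult_distrib power3_eq_cube power2_eq_square\<close>)
    ultimately show ?thesis by simp
  qed
  have c2: "Z^2 \<le> X * W"
  proof -
    have "(\<Sum>i\<in>I. u i * (u i)^2)^2 \<le> (\<Sum>i\<in>I. (u i)^2) * (\<Sum>i\<in>I. ((u i)^2)^2)"
      by (rule Cauchy_Schwarz_ineq_sum)
    moreover have "(\<Sum>i\<in>I. u i * (u i)^2) = Z"
      unfolding Z_def by (intro sum.cong refl) (simp add: power3_eq_cube power2_eq_square)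
    moreover have "(\<Sum>i\<in>I. ((u i)^2)^2) = W"
      unfolding W_def by (intro sum.cong refl) (simp add: power4_eq_xxxx power2_eq_square)
    ultimately show ?thesis unfolding X_def by simp
  qed
  have "X^4 = (X^2)^2" by simp
  also have "\<dots> \<le> (Y * Z)^2" using c1 X0 by (intro power_mono) auto
  also have "\<dots> = Y^2 * Z^2" by (simp add: power_mult_distrib)
  also have "\<dots> \<le> Y^2 * (X * W)" using c2 by (intro mult_left_mono) auto
  finally have *: "X * X^3 \<le> X * (Y^2 * W)" by (simp add: power_def mult_ac)
  show ?thesis
  proof (cases "X = 0")
    case True then show ?thesis unfolding X_def[symmetric] Y_def[symmetric] W_def[symmetric]
      by (simp add: W_def sum_nonneg)
  next
    case False
    with X0 have "X > 0" by simp
    with * have "X^3 \<le> Y^2 * W" by simp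
    then show ?thesis unfolding X_def Y_def W_def .
  qed
qed

lemma mat_norm_ge:
  assumes "(\<Sum>j<n. (cmod (x j))\<^sup>2) \<le> 1" "(\<Sum>i<n. (cmod (y i))\<^sup>2) \<le> 1"
  shows "ereal (cmod (\<Sum>i<n. \<Sum>j<n. cnj (y i) * T i j * x j)) \<le> mat_norm T"
  unfolding mat_norm_def
  by (rule SUP_upper2[where i="(n, x, y)"]) (use assms in auto)

lemma mat_norm_le:
  assumes "\<And>n x y. (\<Sum>j<n. (cmod (x j))\<^sup>2) \<le> 1 \<Longrightarrow> (\<Sum>i<n. (cmod (y i))\<^sup>2) \<le> 1 \<Longrightarrow>
     cmod (\<Sum>i<n. \<Sum>j<n. cnj (y i) * T i j * x j) \<le> c"
  shows "mat_norm T \<le> ereal c"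
  unfolding mat_norm_def
  by (rule SUP_least) (use assms in auto)

lemma CS_sqrt:
  fixes f g :: "'a \<Rightarrow> real"
  shows "(\<Sum>i\<in>I. f i * g i) \<le> sqrt (\<Sum>i\<in>I. (f i)^2) * sqrt (\<Sum>i\<in>I. (g i)^2)"
proof -
  have "(\<Sum>i\<in>I. f i * g i)^2 \<le> (\<Sum>i\<in>I. (f i)^2) * (\<Sum>i\<in>I. (g i)^2)"
    by (rule Cauchy_Schwarz_ineq_sum)
  then have "sqrt ((\<Sum>i\<in>I. f i * g i)^2) \<le> sqrt ((\<Sum>i\<in>I. (f i)^2) * (\<Sum>i\<in>I. (g i)^2))"
    by (rule real_sqrt_le_mono)
  then show ?thesis by (simp add: real_sqrt_mult)
qed

lemma column_bound:
  assumes T: "mat_norm T \<le> 1" and j: "j < n"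
  shows "cmod (\<Sum>i<n. cnj (w i) * T i j) \<le> sqrt (\<Sum>i<n. (cmod (w i))\<^sup>2)"
proof (cases "(\<Sum>i<n. (cmod (w i))\<^sup>2) = 0")
  case True
  then have "\<forall>i\<in>{..<n}. (cmod (w i))\<^sup>2 = 0"
    by (subst sum_nonneg_eq_0_iff[symmetric]) auto
  then have "\<forall>i<n. w i = 0" by auto
  then show ?thesis by simp
next
  case False
  define r where "r = sqrt (\<Sum>i<n. (cmod (w i))\<^sup>2)"
  have "0 \<le> (\<Sum>i<n. (cmod (w i))\<^sup>2)" by (simp add: sum_nonneg)
  with False have "0 < (\<Sum>i<n. (cmod (w i))\<^sup>2)" by simp
  then have r0: "r > 0" unfolding r_def by simp
  define y where "y i = w i / of_real r" for i
  define x where "x j' = (if j' = j then 1 else 0 :: complex)" for j'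
  have "(\<Sum>i<n. (cmod (y i))\<^sup>2) = (\<Sum>i<n. (cmod (w i))\<^sup>2) / r^2"
    unfolding y_def by (simp add: norm_divide power_divide sum_divide_distrib)
  also have "\<dots> = 1" using False r0 unfolding r_def by (simp add: sum_nonneg)
  finally have y1: "(\<Sum>i<n. (cmod (y i))\<^sup>2) \<le> 1" by simp
  have x1: "(\<Sum>j'<n. (cmod (x j'))\<^sup>2) \<le> 1"
    unfolding x_def using j by (simp add: if_distrib[of "\<lambda>t. (cmod t)^2"] cong: if_cong)
  have "ereal (cmod (\<Sum>i<n. \<Sum>j'<n. cnj (y i) * T i j' * x j')) \<le> 1"
    using order_trans[OF mat_norm_ge[OF x1 y1, of T] T] .
  moreover have "(\<Sum>i<n. \<Sum>j'<n. cnj (y i) * T i j' * x j') = (\<Sum>i<n. cnj (w i) * T i j) / of_real r"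
    unfolding x_def y_def using j by (simp add: sum_divide_distrib if_distrib[of "\<lambda>t. _ * t"] cong: if_cong)
  ultimately have "cmod (\<Sum>i<n. cnj (w i) * T i j) / r \<le> 1"
    using r0 by (simp add: norm_divide)
  then show ?thesis using r0 unfolding r_def[symmetric] by (simp add: divide_le_eq)
qed

lemma row_sum_le:
  fixes a :: "int \<Rightarrow> real"
  assumes summ: "(\<lambda>k. (a k)\<^sup>2) summable_on UNIV"
  shows "(\<Sum>j<n. (a (int i - int j))\<^sup>2) \<le> infsum (\<lambda>k. (a k)\<^sup>2) UNIV"
proof -
  have inj: "inj_on (\<lambda>j. int i - int j) {..<n}" by (auto simp: inj_on_def)
  have "(\<Sum>j<n. (a (int i - int j))\<^sup>2) = (\<Sum>k\<in>(\<lambda>j. int i - int j) ` {..<n}. (a k)\<^sup>2)"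
    by (simp add: sum.reindex[OF inj])
  also have "\<dots> \<le> infsum (\<lambda>k. (a k)\<^sup>2) UNIV"
    by (rule finite_sum_le_infsum[OF summ]) auto
  finally show ?thesis .
qed

lemma upper_bound_mat:
  fixes a :: "int \<Rightarrow> real"
  assumes summ: "(\<lambda>k. (a k)\<^sup>2) summable_on UNIV"
    and T: "mat_norm T \<le> 1" and S: "\<And>i j. cmod (S i j) \<le> a (int i - int j)"
  shows "mat_norm (\<lambda>i j. S i j * T i j) \<le> ereal (l2norm_int a)"
proof (rule mat_norm_le)
  fix n :: nat and x y :: "nat \<Rightarrow> complex"
  assume x1: "(\<Sum>j<n. (cmod (x j))\<^sup>2) \<le> 1" and y1: "(\<Sum>i<n. (cmod (y i))\<^sup>2) \<le> 1"
  define L2 where "L2 = infsum (\<lambda>k. (a k)\<^sup>2) UNIV"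
  have L20: "L2 \<ge> 0" unfolding L2_def by (rule infsum_nonneg) simp
  define r where "r j = sqrt (\<Sum>i<n. (cmod (y i * cnj (S i j)))\<^sup>2)" for j
  have "(\<Sum>i<n. \<Sum>j<n. cnj (y i) * (S i j * T i j) * x j) =
        (\<Sum>j<n. x j * (\<Sum>i<n. cnj (y i * cnj (S i j)) * T i j))"
    by (subst sum.swap) (simp add: sum_distrib_left mult_ac)
  then have "cmod (\<Sum>i<n. \<Sum>j<n. cnj (y i) * (S i j * T i j) * x j) \<le>
        (\<Sum>j<n. cmod (x j) * cmod (\<Sum>i<n. cnj (y i * cnj (S i j)) * T i j))"
    by (metis (no_types, lifting) norm_mult norm_sum sum.cong)
  also have "\<dots> \<le> (\<Sum>j<n. cmod (x j) * r j)"
    unfolding r_def by (intro sum_mono mult_left_mono column_bound[OF T]) auto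
  also have "\<dots> \<le> sqrt (\<Sum>j<n. (cmod (x j))^2) * sqrt (\<Sum>j<n. (r j)^2)"
    by (rule CS_sqrt)
  also have "\<dots> \<le> 1 * sqrt (\<Sum>j<n. (r j)^2)"
    using x1 by (intro mult_right_mono) (auto simp: sum_nonneg)
  also have "(\<Sum>j<n. (r j)^2) = (\<Sum>j<n. \<Sum>i<n. (cmod (y i))^2 * (cmod (S i j))^2)"
    unfolding r_def by (simp add: sum_nonneg norm_mult power_mult_distrib)
  also have "\<dots> = (\<Sum>i<n. (cmod (y i))^2 * (\<Sum>j<n. (cmod (S i j))^2))"
    by (subst sum.swap) (simp add: sum_distrib_left)
  also have "\<dots> \<le> (\<Sum>i<n. (cmod (y i))^2 * L2)"
  proof (intro sum_mono mult_left_mono)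
    fix i
    have "(\<Sum>j<n. (cmod (S i j))^2) \<le> (\<Sum>j<n. (a (int i - int j))^2)"
      by (intro sum_mono power_mono S) simp
    also have "\<dots> \<le> L2" unfolding L2_def by (rule row_sum_le[OF summ])
    finally show "(\<Sum>j<n. (cmod (S i j))^2) \<le> L2" .
  qed simp
  also have "\<dots> = (\<Sum>i<n. (cmod (y i))^2) * L2" by (simp add: sum_distrib_right)
  also have "\<dots> \<le> 1 * L2" using y1 L20 by (intro mult_right_mono) auto
  finally show "cmod (\<Sum>i<n. \<Sum>j<n. cnj (y i) * (S i j * T i j) * x j) \<le> l2norm_int a"
    unfolding l2norm_int_def L2_def by simp
qed

lemma upper_bound:
  fixes a :: "int \<Rightarrow> real"
  assumes summ: "(\<lambda>k. (a k)\<^sup>2) summable_on UNIV"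
  shows "schur_sup (\<lambda>i j. a (int i - int j)) \<le> ereal (l2norm_int a)"
  unfolding schur_sup_def schur_mult_norm_def dominated_set_def
  by (intro SUP_least) (auto intro: upper_bound_mat[OF summ])

lemma img1: "(\<lambda>j. int N - int j) ` {..<N} = {1..int N}"
proof
  show "(\<lambda>j. int N - int j) ` {..<N} \<subseteq> {1..int N}" by auto
  show "{1..int N} \<subseteq> (\<lambda>j. int N - int j) ` {..<N}"
  proof
    fix k assume k: "k \<in> {1..int N}"
    then have "k = int N - int (nat (int N - k))" "nat (int N - k) < N" by auto
    then show "k \<in> (\<lambda>j. int N - int j) ` {..<N}" by blast
  qed
qed

lemma img2: "(\<lambda>i. int i - int N) ` {..<Suc N} = {- int N..0}"
proof
  show "(\<lambda>i. int i - int N) ` {..<Suc N} \<subseteq> {- int N..0}" by auto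
  show "{- int N..0} \<subseteq> (\<lambda>i. int i - int N) ` {..<Suc N}"
  proof
    fix k assume k: "k \<in> {- int N..0}"
    then have "k = int (nat (k + int N)) - int N" "nat (k + int N) < Suc N" by auto
    then show "k \<in> (\<lambda>i. int i - int N) ` {..<Suc N}" by blast
  qed
qed

lemma reindex_diff:
  fixes f :: "int \<Rightarrow> 'a::comm_ring_1"
  shows "(\<Sum>i<N. \<Sum>j<N. f (int i - int j)) = (\<Sum>k\<in>{- int N<..<int N}. of_int (int N - \<bar>k\<bar>) * f k)"
proof (induction N)
  case 0
  then show ?case by simp
next
  case (Suc N)
  have L: "(\<Sum>i<Suc N. \<Sum>j<Suc N. f (int i - int j)) =
        (\<Sum>i<N. \<Sum>j<N. f (int i - int j)) + (\<Sum>j<N. f (int N - int j)) + (\<Sum>i<Suc N. f (int i - int N))"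
    by (simp add: sum.distrib)
  have A: "(\<Sum>k\<in>{- int (Suc N)<..<int (Suc N)}. of_int (int N - \<bar>k\<bar>) * f k) =
           (\<Sum>k\<in>{- int N<..<int N}. of_int (int N - \<bar>k\<bar>) * f k)"
  proof (rule sum.mono_neutral_right)
    show "\<forall>k\<in>{- int (Suc N)<..<int (Suc N)} - {- int N<..<int N}. of_int (int N - \<bar>k\<bar>) * f k = 0"
    proof
      fix k assume "k \<in> {- int (Suc N)<..<int (Suc N)} - {- int N<..<int N}"
      then have "\<bar>k\<bar> = int N" by auto
      then show "of_int (int N - \<bar>k\<bar>) * f k = 0" by simp
    qed
  qed auto
  have U: "{- int (Suc N)<..<int (Suc N)} = {1..int N} \<union> {- int N..0}" by auto
  have B: "(\<Sum>k\<in>{- int (Suc N)<..<int (Suc N)}. f k) = (\<Sum>j<N. f (int N - int j)) + (\<Sum>i<Suc N. f (int i - int N))"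
  proof -
    have "(\<Sum>k\<in>{- int (Suc N)<..<int (Suc N)}. f k) = (\<Sum>k\<in>{1..int N}. f k) + (\<Sum>k\<in>{- int N..0}. f k)"
      unfolding U by (rule sum.union_disjoint) auto
    also have "(\<Sum>k\<in>{1..int N}. f k) = (\<Sum>j<N. f (int N - int j))"
      unfolding img1[symmetric] by (subst sum.reindex) (auto simp: inj_on_def)
    also have "(\<Sum>k\<in>{- int N..0}. f k) = (\<Sum>i<Suc N. f (int i - int N))"
      unfolding img2[symmetric] by (subst sum.reindex) (auto simp: inj_on_def)
    finally show ?thesis .
  qed
  have "(\<Sum>k\<in>{- int (Suc N)<..<int (Suc N)}. of_int (int (Suc N) - \<bar>k\<bar>) * f k) =
        (\<Sum>k\<in>{- int (Suc N)<..<int (Suc N)}. of_int (int N - \<bar>k\<bar>) * f k) + (\<Sum>k\<in>{- int (Suc N)<..<int (Suc N)}. f k)"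
    by (simp add: sum.distrib[symmetric] algebra_simps)
  also have "\<dots> = (\<Sum>i<N. \<Sum>j<N. f (int i - int j)) + ((\<Sum>j<N. f (int N - int j)) + (\<Sum>i<Suc N. f (int i - int N)))"
    unfolding A B Suc.IH ..
  finally show ?case unfolding L by (simp add: add.assoc)
qed

lemma sum_prod_fs: "(\<Sum>p\<in>A \<times> B. f (fst p) (snd p)) = (\<Sum>x\<in>A. \<Sum>y\<in>B. f x y)"
  by (simp add: sum.cartesian_product split_def)

lemma swap3b: "(\<Sum>i\<in>A. \<Sum>j\<in>B. \<Sum>l\<in>C. f i j l) = (\<Sum>l\<in>C. \<Sum>i\<in>A. \<Sum>j\<in>B. f i j l)"
proof -
  have "(\<Sum>i\<in>A. \<Sum>j\<in>B. \<Sum>l\<in>C. f i j l) = (\<Sum>i\<in>A. \<Sum>l\<in>C. \<Sum>j\<in>B. f i j l)"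
    by (rule sum.cong[OF refl]) (rule sum.swap)
  also have "\<dots> = (\<Sum>l\<in>C. \<Sum>i\<in>A. \<Sum>j\<in>B. f i j l)" by (rule sum.swap)
  finally show ?thesis .
qed

lemma cnj_sgn_mult: "cnj (sgn z) * z = complex_of_real (cmod z)"
proof (cases "z = 0")
  case False
  have "cnj (sgn z) * z = (z * cnj z) / complex_of_real (cmod z)"
    by (simp add: sgn_div_norm divide_inverse mult_ac scaleR_conv_of_real)
  also have "\<dots> = complex_of_real ((cmod z)^2) / complex_of_real (cmod z)"
    by (simp only: complex_norm_square)
  also have "\<dots> = complex_of_real (cmod z)" using False by (simp add: power2_eq_square)
  finally show ?thesis .
qed simp

lemma norm_cnj_sgn_le: "cmod (cnj (sgn z)) \<le> 1"
  by (simp add: norm_sgn)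

lemma holder_Y:
  fixes X Y Z B m :: real
  assumes "X = m * B" "Z \<le> 2 * m * B^2" "X^3 \<le> Y^2 * Z" "m > 0" "B \<ge> 0" "Y \<ge> 0"
  shows "Y \<ge> m * sqrt (B / 2)"
proof (cases "B = 0")
  case True then show ?thesis using assms by simp
next
  case False
  then have B0: "B > 0" using assms by simp
  have "m^3 * B^3 \<le> Y^2 * (2 * m * B^2)"
  proof -
    have "m^3 * B^3 = X^3" using assms(1) by (simp add: power_mult_distrib)
    also have "\<dots> \<le> Y^2 * Z" by fact
    also have "\<dots> \<le> Y^2 * (2 * m * B^2)" using assms(2) by (intro mult_left_mono) auto
    finally show ?thesis .
  qed
  then have "(m * B^2) * (m^2 * B) \<le> (m * B^2) * (2 * Y^2)"
    by (simp add: power_def mult_ac)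
  then have "m^2 * B \<le> 2 * Y^2" using B0 assms(4) by (simp add: mult_le_cancel_left)
  then have "(m * sqrt (B / 2))^2 \<le> Y^2"
    using B0 by (simp add: power_mult_distrib)
  then show ?thesis using assms(6) by (rule power2_le_imp_le)
qed

lemma lower_N:
  fixes a :: "int \<Rightarrow> real"
  assumes a0: "\<And>k. a k \<ge> 0" and N: "0 < N"
  shows "ereal (sqrt (\<Sum>k\<in>{- int N<..<int N}. (a k * (real N - \<bar>real_of_int k\<bar>) / real N)^2) / sqrt 2)
         \<le> schur_sup (\<lambda>i j. a (int i - int j))"
proof -
  define K where "K = {- int N<..<int N}"
  define M where "M = 4 * (N * N) + 1"
  define b where "b k = a k * max 0 (real N - \<bar>real_of_int k\<bar>) / real N" for k
  have M0: "0 < M" unfolding M_def by simp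
  have "N \<le> N * N" using N by simp
  then have NM: "N \<le> M" unfolding M_def by linarith
  have Kfin: "finite K" unfolding K_def by simp
  have bnn: "b k \<ge> 0" for k unfolding b_def using a0 N by simp
  have kb: "\<bar>k\<bar> < int N" if "k \<in> K" for k using that unfolding K_def by auto
  have bK: "b k = a k * (real N - \<bar>real_of_int k\<bar>) / real N" if "k \<in> K" for k
  proof -
    have "\<bar>real_of_int k\<bar> \<le> real N" using kb[OF that] by linarith
    then show ?thesis unfolding b_def by simp
  qed
  define B where "B = (\<Sum>k\<in>K. (b k)^2)"
  have Beq: "B = (\<Sum>k\<in>{- int N<..<int N}. (a k * (real N - \<bar>real_of_int k\<bar>) / real N)^2)"
    unfolding B_def K_def[symmetric] by (intro sum.cong refl) (simp add: bK)
  have B0: "B \<ge> 0" unfolding B_def by (simp add: sum_nonneg)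
  have ksq: "0 \<le> k^2 \<and> k^2 \<le> int N * int N" if "k \<in> K" for k
  proof -
    have "\<bar>k\<bar> \<le> \<bar>int N\<bar>" using kb[OF that] by simp
    then have "k^2 \<le> (int N)^2" using abs_le_square_iff by blast
    then show ?thesis by (simp add: power2_eq_square)
  qed
  have NN: "int N \<le> int N * int N" using N by simp
  have MI: "int M = 4 * int N * int N + 1" unfolding M_def by simp
  have bd2: "\<bar>k1 - k2\<bar> < int M \<and> \<bar>k1^2 - k2^2\<bar> < int M" if "k1 \<in> K" "k2 \<in> K" for k1 k2
    using kb[OF that(1)] kb[OF that(2)] ksq[OF that(1)] ksq[OF that(2)] NN unfolding MI by linarith
  have bd4: "\<bar>k1 - k2 + k3 - k4\<bar> < int M \<and> \<bar>k1^2 - k2^2 + k3^2 - k4^2\<bar> < int M"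
    if "k1 \<in> K" "k2 \<in> K" "k3 \<in> K" "k4 \<in> K" for k1 k2 k3 k4
    using kb[OF that(1)] kb[OF that(2)] kb[OF that(3)] kb[OF that(4)]
      ksq[OF that(1)] ksq[OF that(2)] ksq[OF that(3)] ksq[OF that(4)] NN unfolding MI by linarith
  define G where "G \<beta> l = GG M K b \<beta> l" for \<beta> l
  have sm: "(\<Sum>\<beta><M. \<Sum>l<M. (cmod (G \<beta> l))\<^sup>2) = (real M)^2 * B"
    unfolding G_def B_def by (rule second_moment[OF M0 Kfin bd2])
  have fm: "(\<Sum>\<beta><M. \<Sum>l<M. (cmod (G \<beta> l))^4) \<le> 2 * (real M)^2 * B^2"
    unfolding G_def B_def by (rule fourth_moment[OF M0 Kfin bnn bd4])
  have H: "(\<Sum>\<beta><M. \<Sum>l<M. (cmod (G \<beta> l))\<^sup>2)^3 \<le> (\<Sum>\<beta><M. \<Sum>l<M. cmod (G \<beta> l))^2 * (\<Sum>\<beta><M. \<Sum>l<M. (cmod (G \<beta> l))^4)"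
  proof -
    have H0: "(\<Sum>p\<in>{..<M} \<times> {..<M}. (cmod (G (fst p) (snd p)))^2)^3 \<le>
       (\<Sum>p\<in>{..<M} \<times> {..<M}. cmod (G (fst p) (snd p)))^2 * (\<Sum>p\<in>{..<M} \<times> {..<M}. (cmod (G (fst p) (snd p)))^4)"
      by (rule holder4) simp
    show ?thesis
      using H0 unfolding sum_prod_fs[of "\<lambda>x y. (cmod (G x y))^2"] sum_prod_fs[of "\<lambda>x y. (cmod (G x y))"]
        sum_prod_fs[of "\<lambda>x y. (cmod (G x y))^4"] .
  qed
  have Ybd: "(\<Sum>\<beta><M. \<Sum>l<M. cmod (G \<beta> l)) \<ge> (real M)^2 * sqrt (B / 2)"
    by (rule holder_Y[OF sm fm H]) (use M0 B0 in \<open>auto simp: sum_nonneg\<close>)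
  have "\<exists>\<beta><M. (\<Sum>l<M. cmod (G \<beta> l)) \<ge> real M * sqrt (B / 2)"
  proof (rule ccontr)
    assume nex: "\<not> (\<exists>\<beta><M. (\<Sum>l<M. cmod (G \<beta> l)) \<ge> real M * sqrt (B / 2))"
    have lt: "(\<Sum>l<M. cmod (G \<beta> l)) < real M * sqrt (B / 2)" if "\<beta> < M" for \<beta>
      using that nex by (meson not_le)
    have "(\<Sum>\<beta><M. \<Sum>l<M. cmod (G \<beta> l)) < (\<Sum>\<beta><M. real M * sqrt (B / 2))"
      using M0 by (intro sum_strict_mono lt) auto
    also have "\<dots> = (real M)^2 * sqrt (B / 2)" by (simp add: power2_eq_square)
    finally show False using Ybd by simp
  qed
  then obtain \<beta> where \<beta>: "\<beta> < M" and Gb: "(\<Sum>l<M. cmod (G \<beta> l)) \<ge> real M * sqrt (B / 2)"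
    by blast
  define g where "g l = cnj (sgn (G \<beta> l))" for l
  define c where "c d = (1 / of_nat M) * (\<Sum>l<M. g l * ee M (real l * of_int d))" for d
  define T where "T i j = (if i < N \<and> j < N then c (int i - int j) else 0)" for i j
  define S where "S i j = complex_of_real (a (int i - int j)) * cnj (sgn (T i j))" for i j
  have gle: "cmod (g l) \<le> 1" for l unfolding g_def by (rule norm_cnj_sgn_le)
  have Tnorm: "mat_norm T \<le> 1"
  proof -
    have "mat_norm T \<le> ereal 1"
    proof (rule mat_norm_le)
      fix n :: nat and x y :: "nat \<Rightarrow> complex"
      assume x1: "(\<Sum>j<n. (cmod (x j))\<^sup>2) \<le> 1" and y1: "(\<Sum>i<n. (cmod (y i))\<^sup>2) \<le> 1"
      define m where "m = min n N"
      have mn: "m \<le> n" and mN: "m \<le> N" and mM: "m \<le> M" unfolding m_def using NM by auto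
      define X where "X l = (\<Sum>j<m. x j * ee M (- (real l * real j)))" for l :: nat
      define Y where "Y l = (\<Sum>j<m. y j * ee M (- (real l * real j)))" for l :: nat
      have e1: "(\<Sum>i<n. \<Sum>j<n. cnj (y i) * T i j * x j) = (\<Sum>i<m. \<Sum>j<m. cnj (y i) * c (int i - int j) * x j)"
      proof -
        have "(\<Sum>i<n. \<Sum>j<n. cnj (y i) * T i j * x j) = (\<Sum>i<m. \<Sum>j<n. cnj (y i) * T i j * x j)"
        proof (rule sum.mono_neutral_right)
          show "\<forall>i\<in>{..<n} - {..<m}. (\<Sum>j<n. cnj (y i) * T i j * x j) = 0"
          proof
            fix i assume "i \<in> {..<n} - {..<m}"
            then have "\<not> i < N" unfolding m_def by auto
            then show "(\<Sum>j<n. cnj (y i) * T i j * x j) = 0" unfolding T_def by simp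
          qed
        qed (use mn in auto)
        also have "\<dots> = (\<Sum>i<m. \<Sum>j<m. cnj (y i) * T i j * x j)"
        proof (rule sum.cong[OF refl])
          fix i
          show "(\<Sum>j<n. cnj (y i) * T i j * x j) = (\<Sum>j<m. cnj (y i) * T i j * x j)"
          proof (rule sum.mono_neutral_right)
            show "\<forall>j\<in>{..<n} - {..<m}. cnj (y i) * T i j * x j = 0"
            proof
              fix j assume "j \<in> {..<n} - {..<m}"
              then have "\<not> j < N" unfolding m_def by auto
              then show "cnj (y i) * T i j * x j = 0" unfolding T_def by simp
            qed
          qed (use mn in auto)
        qed
        also have "\<dots> = (\<Sum>i<m. \<Sum>j<m. cnj (y i) * c (int i - int j) * x j)"
          by (intro sum.cong refl) (use mN in \<open>auto simp: T_def\<close>)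
        finally show ?thesis .
      qed
      have e2: "(\<Sum>i<m. \<Sum>j<m. cnj (y i) * c (int i - int j) * x j) = (1 / of_nat M) * (\<Sum>l<M. g l * (cnj (Y l) * X l))"
      proof -
        have pt: "cnj (Y l) * X l = (\<Sum>i<m. \<Sum>j<m. cnj (y i) * x j * ee M (real l * of_int (int i - int j)))" for l
        proof -
          have "cnj (Y l) * X l = (\<Sum>i<m. \<Sum>j<m. cnj (y i * ee M (- (real l * real i))) * (x j * ee M (- (real l * real j))))"
            unfolding X_def Y_def cnj_sum sum_product ..
          also have "\<dots> = (\<Sum>i<m. \<Sum>j<m. cnj (y i) * x j * ee M (real l * of_int (int i - int j)))"
            by (intro sum.cong refl) (simp add: ee_cnj mult_ac ee_mult algebra_simps)
          finally show ?thesis .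
        qed
        have "(\<Sum>i<m. \<Sum>j<m. cnj (y i) * c (int i - int j) * x j) =
              (\<Sum>i<m. \<Sum>j<m. \<Sum>l<M. (1 / of_nat M) * (g l * (cnj (y i) * x j * ee M (real l * of_int (int i - int j)))))"
          unfolding c_def by (simp add: sum_distrib_left sum_distrib_right mult_ac)
        also have "\<dots> = (\<Sum>l<M. \<Sum>i<m. \<Sum>j<m. (1 / of_nat M) * (g l * (cnj (y i) * x j * ee M (real l * of_int (int i - int j)))))"
          by (rule swap3b)
        also have "\<dots> = (1 / of_nat M) * (\<Sum>l<M. g l * (cnj (Y l) * X l))"
          unfolding pt by (simp only: sum_distrib_left)
        finally show ?thesis .
      qed
      have "cmod ((1 / of_nat M) * (\<Sum>l<M. g l * (cnj (Y l) * X l))) \<le> (1 / real M) * (\<Sum>l<M. cmod (Y l) * cmod (X l))"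
      proof -
        have "cmod (\<Sum>l<M. g l * (cnj (Y l) * X l)) \<le> (\<Sum>l<M. cmod (g l * (cnj (Y l) * X l)))"
          by (rule norm_sum)
        also have "\<dots> \<le> (\<Sum>l<M. cmod (Y l) * cmod (X l))"
        proof (rule sum_mono)
          fix l
          have "cmod (g l * (cnj (Y l) * X l)) = cmod (g l) * (cmod (Y l) * cmod (X l))"
            by (simp add: norm_mult)
          also have "\<dots> \<le> 1 * (cmod (Y l) * cmod (X l))"
            by (rule mult_right_mono[OF gle]) simp
          finally show "cmod (g l * (cnj (Y l) * X l)) \<le> cmod (Y l) * cmod (X l)" by simp
        qed
        finally show ?thesis using M0 by (simp add: norm_mult norm_divide divide_right_mono)
      qed
      also have "\<dots> \<le> (1 / real M) * (sqrt (\<Sum>l<M. (cmod (Y l))^2) * sqrt (\<Sum>l<M. (cmod (X l))^2))"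
        by (intro mult_left_mono CS_sqrt) simp
      also have "(\<Sum>l<M. (cmod (Y l))^2) = real M * (\<Sum>i<m. (cmod (y i))^2)"
        unfolding Y_def by (rule parseval[OF M0 mM])
      also have "(\<Sum>l<M. (cmod (X l))^2) = real M * (\<Sum>j<m. (cmod (x j))^2)"
        unfolding X_def by (rule parseval[OF M0 mM])
      also have "(1 / real M) * (sqrt (real M * (\<Sum>i<m. (cmod (y i))^2)) * sqrt (real M * (\<Sum>j<m. (cmod (x j))^2))) \<le> 1"
      proof -
        have ym: "(\<Sum>i<m. (cmod (y i))^2) \<le> 1"
          using y1 sum_mono2[of "{..<n}" "{..<m}" "\<lambda>i. (cmod (y i))^2"] mn by force
        have xm: "(\<Sum>j<m. (cmod (x j))^2) \<le> 1"
          using x1 sum_mono2[of "{..<n}" "{..<m}" "\<lambda>i. (cmod (x i))^2"] mn by force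
        have "sqrt (real M * (\<Sum>i<m. (cmod (y i))^2)) * sqrt (real M * (\<Sum>j<m. (cmod (x j))^2))
              \<le> sqrt (real M * 1) * sqrt (real M * 1)"
          using ym xm by (intro mult_mono real_sqrt_le_mono mult_left_mono) (auto simp: sum_nonneg)
        also have "\<dots> = real M" by simp
        finally show ?thesis using M0 by (simp add: divide_le_eq)
      qed
      finally show "cmod (\<Sum>i<n. \<Sum>j<n. cnj (y i) * T i j * x j) \<le> 1"
        unfolding e1 e2 .
    qed
    then show ?thesis by (simp add: one_ereal_def)
  qed
  have Sdom: "S \<in> dominated_set (\<lambda>i j. a (int i - int j))"
    unfolding dominated_set_def S_def using a0 norm_cnj_sgn_le
    by (auto simp: norm_mult intro: mult_left_le)
  define V where "V = (\<Sum>i<N. \<Sum>j<N. a (int i - int j) * cmod (c (int i - int j)) / real N)"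
  have val: "ereal V \<le> mat_norm (\<lambda>i j. S i j * T i j)"
  proof -
    define x where "x j = complex_of_real (1 / sqrt (real N))" for j :: nat
    have x1: "(\<Sum>j<N. (cmod (x j))\<^sup>2) \<le> 1"
    proof -
      have "(cmod (x j))\<^sup>2 = 1 / real N" for j
        unfolding x_def norm_of_real using N by (simp add: power_divide)
      then show ?thesis using N by simp
    qed
    have "(\<Sum>i<N. \<Sum>j<N. cnj (x i) * (S i j * T i j) * x j) = (\<Sum>i<N. \<Sum>j<N. complex_of_real (a (int i - int j) * cmod (c (int i - int j)) / real N))"
    proof (intro sum.cong refl)
      fix i j assume i: "i \<in> {..<N}" and j: "j \<in> {..<N}"
      have ST: "S i j * T i j = complex_of_real (a (int i - int j)) * complex_of_real (cmod (c (int i - int j)))"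
        unfolding S_def using i j cnj_sgn_mult[of "T i j"] by (simp add: T_def mult.assoc)
      have xx: "cnj (x i) * x j = complex_of_real (1 / real N)"
        unfolding x_def using N by (simp flip: of_real_mult)
      have "cnj (x i) * (S i j * T i j) * x j = (cnj (x i) * x j) * (S i j * T i j)" by (simp add: mult_ac)
      also have "\<dots> = complex_of_real (a (int i - int j) * cmod (c (int i - int j)) / real N)"
        unfolding xx ST by (simp flip: of_real_mult)
      finally show "cnj (x i) * (S i j * T i j) * x j = complex_of_real (a (int i - int j) * cmod (c (int i - int j)) / real N)" .
    qed
    also have "\<dots> = complex_of_real V" unfolding V_def by (simp only: of_real_sum)
    finally have eq: "(\<Sum>i<N. \<Sum>j<N. cnj (x i) * (S i j * T i j) * x j) = complex_of_real V" .
    have "ereal (cmod (\<Sum>i<N. \<Sum>j<N. cnj (x i) * (S i j * T i j) * x j)) \<le> mat_norm (\<lambda>i j. S i j * T i j)"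
      by (rule mat_norm_ge[OF x1 x1])
    then show ?thesis unfolding eq by (simp add: order_trans[rotated])
  qed
  have VB: "sqrt (B / 2) \<le> V"
  proof -
    define \<phi> where "\<phi> d = ee M (real \<beta> * of_int (d^2))" for d
    define W where "W = (\<Sum>i<N. \<Sum>j<N. complex_of_real (a (int i - int j) / real N) * \<phi> (int i - int j) * c (int i - int j))"
    have s1: "Re W \<le> V"
    proof -
      have "Re W = (\<Sum>i<N. \<Sum>j<N. Re (complex_of_real (a (int i - int j) / real N) * \<phi> (int i - int j) * c (int i - int j)))"
        unfolding W_def by (simp only: Re_sum)
      also have "\<dots> \<le> (\<Sum>i<N. \<Sum>j<N. cmod (complex_of_real (a (int i - int j) / real N) * \<phi> (int i - int j) * c (int i - int j)))"
        by (intro sum_mono complex_Re_le_cmod)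
      also have "\<dots> = V" unfolding V_def norm_mult norm_of_real \<phi>_def norm_ee using a0 N by simp
      finally show ?thesis .
    qed
    have s2: "W = (1 / of_nat M) * (\<Sum>l<M. g l * G \<beta> l)"
    proof -
      have "W = (\<Sum>i<N. \<Sum>j<N. \<Sum>l<M. (1 / of_nat M) * (g l * (complex_of_real (a (int i - int j) / real N) * \<phi> (int i - int j) * ee M (real l * of_int (int i - int j)))))"
        unfolding W_def c_def by (simp add: sum_distrib_left mult_ac)
      also have "\<dots> = (\<Sum>l<M. \<Sum>i<N. \<Sum>j<N. (1 / of_nat M) * (g l * (complex_of_real (a (int i - int j) / real N) * \<phi> (int i - int j) * ee M (real l * of_int (int i - int j)))))"
        by (rule swap3b)
      also have "\<dots> = (1 / of_nat M) * (\<Sum>l<M. g l * (\<Sum>i<N. \<Sum>j<N. complex_of_real (a (int i - int j) / real N) * \<phi> (int i - int j) * ee M (real l * of_int (int i - int j))))"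
        by (simp only: sum_distrib_left)
      also have "\<dots> = (1 / of_nat M) * (\<Sum>l<M. g l * G \<beta> l)"
      proof -
        have "(\<Sum>i<N. \<Sum>j<N. complex_of_real (a (int i - int j) / real N) * \<phi> (int i - int j) * ee M (real l * of_int (int i - int j))) = G \<beta> l" for l
        proof -
          have "(\<Sum>i<N. \<Sum>j<N. complex_of_real (a (int i - int j) / real N) * \<phi> (int i - int j) * ee M (real l * of_int (int i - int j)))
              = (\<Sum>k\<in>K. of_int (int N - \<bar>k\<bar>) * (complex_of_real (a k / real N) * \<phi> k * ee M (real l * of_int k)))"
            unfolding K_def by (rule reindex_diff)
          also have "\<dots> = G \<beta> l"
            unfolding G_def GG_def
          proof (intro sum.cong refl)
            fix k assume k: "k \<in> K"
            have "of_int (int N - \<bar>k\<bar>) * (complex_of_real (a k / real N) * \<phi> k * ee M (real l * of_int k)) =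
                 complex_of_real (of_int (int N - \<bar>k\<bar>) * (a k / real N)) * (ee M (real l * of_int k) * \<phi> k)"
            proof -
              have e: "complex_of_real \<bar>real_of_int k\<bar> = complex_of_int \<bar>k\<bar>"
                by (metis of_int_abs of_real_of_int_eq)
              show ?thesis by (simp add: mult_ac e)
            qed
            also have "of_int (int N - \<bar>k\<bar>) * (a k / real N) = b k"
              using bK[OF k] by simp
            also have "ee M (real l * of_int k) * \<phi> k = ee M (real l * of_int k + real \<beta> * of_int (k^2))"
              unfolding \<phi>_def by (simp add: ee_mult)
            finally show "of_int (int N - \<bar>k\<bar>) * (complex_of_real (a k / real N) * \<phi> k * ee M (real l * of_int k)) =
                 complex_of_real (b k) * ee M (real l * of_int k + real \<beta> * of_int (k^2))" .
          qed
          finally show ?thesis .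
        qed
        then show ?thesis by simp
      qed
      finally show ?thesis .
    qed
    have s3: "W = complex_of_real ((1 / real M) * (\<Sum>l<M. cmod (G \<beta> l)))"
      unfolding s2 g_def by (simp add: cnj_sgn_mult)
    have "sqrt (B / 2) \<le> (1 / real M) * (\<Sum>l<M. cmod (G \<beta> l))"
      using Gb M0 by (simp add: field_simps)
    also have "\<dots> = Re W" unfolding s3 by simp
    also have "\<dots> \<le> V" by (rule s1)
    finally show ?thesis .
  qed
  have "ereal (sqrt (B / 2)) \<le> mat_norm (\<lambda>i j. S i j * T i j)"
    using VB val by (meson ereal_less_eq(3) order_trans)
  also have "\<dots> \<le> schur_mult_norm S"
    unfolding schur_mult_norm_def by (rule SUP_upper2[where i=T]) (use Tnorm in auto)
  also have "\<dots> \<le> schur_sup (\<lambda>i j. a (int i - int j))"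
    unfolding schur_sup_def by (rule SUP_upper[OF Sdom])
  finally show ?thesis unfolding Beq by (simp add: real_sqrt_divide)
qed

lemma lower_real:
  fixes a :: "int \<Rightarrow> real"
  assumes a0: "\<And>k. a k \<ge> 0" and summ: "(\<lambda>k. (a k)\<^sup>2) summable_on UNIV"
    and r: "r < l2norm_int a / sqrt 2"
  shows "ereal r \<le> schur_sup (\<lambda>i j. a (int i - int j))"
proof -
  define BN where "BN N = (\<Sum>k\<in>{- int N<..<int N}. (a k * (real N - \<bar>real_of_int k\<bar>) / real N)^2)" for N :: nat
  have low: "ereal (sqrt (BN N) / sqrt 2) \<le> schur_sup (\<lambda>i j. a (int i - int j))" if "0 < N" for N
    unfolding BN_def by (rule lower_N[OF a0 that])
  show ?thesis
  proof (cases "r \<le> 0")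
    case True
    have "0 \<le> BN 1" unfolding BN_def by (intro sum_nonneg) simp
    then have "0 \<le> sqrt (BN 1) / sqrt 2" by simp
    then have "ereal r \<le> ereal (sqrt (BN 1) / sqrt 2)" using True by simp
    also have "\<dots> \<le> schur_sup (\<lambda>i j. a (int i - int j))" by (rule low) simp
    finally show ?thesis .
  next
    case False
    then have r0: "r > 0" by simp
    define t where "t = r * sqrt 2"
    define Q where "Q = infsum (\<lambda>k. (a k)\<^sup>2) UNIV"
    have Q0: "Q \<ge> 0" unfolding Q_def by (rule infsum_nonneg) simp
    have t0: "t > 0" unfolding t_def using r0 by simp
    have "t < sqrt Q" using r unfolding t_def Q_def l2norm_int_def by (simp add: field_simps)
    then have tQ: "t^2 < Q" using t0 Q0
      by (metis abs_of_pos real_sqrt_abs real_sqrt_less_iff)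
    have hs: "((\<lambda>k. (a k)\<^sup>2) has_sum Q) UNIV" unfolding Q_def using summ by (rule has_sum_infsum)
    obtain F where F: "finite F" and dF: "dist (\<Sum>k\<in>F. (a k)\<^sup>2) Q \<le> (Q - t^2) / 2"
      using has_sum_finite_approximation[OF hs, of "(Q - t^2) / 2"] tQ by auto
    define q where "q = (\<Sum>k\<in>F. (a k)\<^sup>2)"
    have qt: "q > t^2" using dF tQ unfolding q_def dist_real_def by (simp add: abs_if split: if_splits)
    then have q0: "q > 0" using t0 by (smt (verit) zero_le_power2)
    define K0 where "K0 = nat (Max (insert 0 (abs ` F)))"
    have K0: "\<bar>k\<bar> \<le> int K0" if "k \<in> F" for k
    proof -
      have "\<bar>k\<bar> \<le> Max (insert 0 (abs ` F))" using F that by (intro Max_ge) auto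
      then show ?thesis unfolding K0_def by linarith
    qed
    define \<rho> where "\<rho> = t / sqrt q"
    have \<rho>1: "\<rho> < 1" and \<rho>0: "\<rho> > 0"
    proof -
      have "t < sqrt q" using qt t0
        by (metis abs_of_pos real_sqrt_abs real_sqrt_less_iff)
      then show "\<rho> < 1" unfolding \<rho>_def using q0 by simp
      show "\<rho> > 0" unfolding \<rho>_def using q0 t0 by simp
    qed
    obtain N :: nat where N: "real K0 / (1 - \<rho>) < real N" using reals_Archimedean2 by blast
    have N0: "0 < N"
    proof -
      have "0 \<le> real K0 / (1 - \<rho>)" using \<rho>1 by simp
      then show ?thesis using N by linarith
    qed
    have KN: "real K0 < (1 - \<rho>) * real N" using N \<rho>1 by (simp add: field_simps)
    then have KN': "real K0 < real N" using \<rho>0 \<rho>1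
      by (smt (verit) mult_left_le_one_le of_nat_0_le_iff)
    define e where "e = 1 - real K0 / real N"
    have e\<rho>: "e > \<rho>" unfolding e_def using KN N0 by (simp add: field_simps)
    have e1: "e \<le> 1" unfolding e_def by simp
    have "e^2 * q = (\<Sum>k\<in>F. (a k * e)^2)" unfolding q_def by (simp add: sum_distrib_left power_mult_distrib mult_ac)
    also have "\<dots> \<le> (\<Sum>k\<in>F. (a k * (real N - \<bar>real_of_int k\<bar>) / real N)^2)"
    proof (rule sum_mono)
      fix k assume k: "k \<in> F"
      have "e \<le> (real N - \<bar>real_of_int k\<bar>) / real N"
        unfolding e_def using K0[OF k] N0 by (simp add: field_simps)
      moreover have "0 \<le> e" using e\<rho> \<rho>0 by simp
      ultimately have "a k * e \<le> a k * ((real N - \<bar>real_of_int k\<bar>) / real N)"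
        using a0 by (intro mult_left_mono) auto
      then show "(a k * e)^2 \<le> (a k * (real N - \<bar>real_of_int k\<bar>) / real N)^2"
        using a0 \<open>0 \<le> e\<close> by (intro power_mono) auto
    qed
    also have "\<dots> \<le> BN N"
      unfolding BN_def
    proof (rule sum_mono2)
      show "F \<subseteq> {- int N<..<int N}"
      proof
        fix k assume "k \<in> F"
        with K0 have "\<bar>k\<bar> \<le> int K0" by blast
        with KN' show "k \<in> {- int N<..<int N}" by auto
      qed
    qed auto
    finally have eqB: "e^2 * q \<le> BN N" .
    have "t = \<rho> * sqrt q" unfolding \<rho>_def using q0 by simp
    also have "\<dots> < e * sqrt q" using e\<rho> q0 by simp
    also have "\<dots> = sqrt (e^2 * q)" using e\<rho> \<rho>0 by (simp add: real_sqrt_mult)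
    also have "\<dots> \<le> sqrt (BN N)" using eqB by simp
    finally have "t < sqrt (BN N)" .
    then have "r \<le> sqrt (BN N) / sqrt 2" unfolding t_def by (simp add: field_simps)
    then have "ereal r \<le> ereal (sqrt (BN N) / sqrt 2)" by simp
    also have "\<dots> \<le> schur_sup (\<lambda>i j. a (int i - int j))" by (rule low[OF N0])
    finally show ?thesis .
  qed
qed

theorem theorem3p4:
  fixes a :: "int \<Rightarrow> real"
  assumes "\<And>k. a k \<ge> 0"
    and "(\<lambda>k. (a k)\<^sup>2) summable_on UNIV"
  shows "ereal (l2norm_int a / sqrt 2) \<le> schur_sup (\<lambda>i j. a (int i - int j))
       \<and> schur_sup (\<lambda>i j. a (int i - int j)) \<le> ereal (l2norm_int a)"
proof
  show "schur_sup (\<lambda>i j. a (int i - int j)) \<le> ereal (l2norm_int a)"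
    by (rule upper_bound[OF assms(2)])
  show "ereal (l2norm_int a / sqrt 2) \<le> schur_sup (\<lambda>i j. a (int i - int j))"
  proof (rule dense_le)
    fix y assume y: "y < ereal (l2norm_int a / sqrt 2)"
    show "y \<le> schur_sup (\<lambda>i j. a (int i - int j))"
    proof (cases y)
      case (real r)
      then show ?thesis using lower_real[OF assms, of r] y by simp
    next
      case PInf then show ?thesis using y by simp
    next
      case MInf then show ?thesis by simp
    qed
  qed
qed


end
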